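(* Let $n\ge2$ and let $\Sigma=\mathbb{R}^n\subset\mathbb{R}^{n+1}$ be a hyperplane through the origin. Then the region $$\Big\{\vec x\in\Sigma:\ |\vec x|>2\sqrt{(n+2)\Big(\sqrt{\tfrac{3n+2}{n+2}}-1\Big)}\Big\}$$ is stable.
   Context: Stability operator on a self-shrinker: $Lf=\Delta f-\tfrac12\langle\vec x,\nabla f\rangle+(|A|^2+\tfrac12)f$. A region $\Omega$ is stable if there exists a function $u$ with $Lu=0$ and $u>0$ on $\Omega$. *)

theory Defs
  imports "HOL-Analysis.Analysis"
begin

definition pdiff :: "('a::euclidean_space \<Rightarrow> real) \<Rightarrow> 'a \<Rightarrow> 'a \<Rightarrow> real" where
  "pdiff u i x = frechet_derivative u (at x) i"

definition grad :: "('a::euclidean_space \<Rightarrow> real) \<Rightarrow> 'a \<Rightarrow> 'a" where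
  "grad u x = (\<Sum>i\<in>Basis. pdiff u i x *\<^sub>R i)"

definition laplacian :: "('a::euclidean_space \<Rightarrow> real) \<Rightarrow> 'a \<Rightarrow> real" where
  "laplacian u x = (\<Sum>i\<in>Basis. pdiff (pdiff u i) i x)"

definition C2_on :: "'a::euclidean_space set \<Rightarrow> ('a \<Rightarrow> real) \<Rightarrow> bool" where
  "C2_on \<Omega> u \<longleftrightarrow>
     (\<forall>x\<in>\<Omega>. u differentiable at x) \<and>
     (\<forall>i\<in>Basis. \<forall>x\<in>\<Omega>. pdiff u i differentiable at x) \<and>
     (\<forall>i\<in>Basis. \<forall>j\<in>Basis. continuous_on \<Omega> (pdiff (pdiff u i) j))"

text \<open>Stability operator of a self-shrinker with squared second fundamental form Asq:
  L f = \<Delta>f - 1/2 <x, \<nabla>f> + (|A|^2 + 1/2) f.\<close>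
definition stab_op :: "('a::euclidean_space \<Rightarrow> real) \<Rightarrow> ('a \<Rightarrow> real) \<Rightarrow> 'a \<Rightarrow> real" where
  "stab_op Asq f x = laplacian f x - (1/2) * (x \<bullet> grad f x) + (Asq x + 1/2) * f x"

text \<open>A region \<Omega> of the shrinker (parametrized by the Euclidean space 'a) is stable
  if there is a (C^2) u with L u = 0 and u > 0 on \<Omega>.\<close>
definition stable_region :: "('a::euclidean_space \<Rightarrow> real) \<Rightarrow> 'a set \<Rightarrow> bool" where
  "stable_region Asq \<Omega> \<longleftrightarrow>
     (\<exists>u. C2_on \<Omega> u \<and> (\<forall>x\<in>\<Omega>. stab_op Asq u x = 0 \<and> u x > 0))"

end

theory Submission
  imports Defs
begin

fun acoef :: "real \<Rightarrow> nat \<Rightarrow> real" where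
  "acoef n 0 = -1"
| "acoef n (Suc k) = (real k - 1/2) * acoef n k / ((real k + 1) * (4*real k + 2*n))"

definition G :: "real \<Rightarrow> real \<Rightarrow> real" where
  "G n s = (\<Sum>k. acoef n k * s^k)"

lemma acoef_bound:
  assumes "n \<ge> 1" shows "\<bar>acoef n k\<bar> \<le> 1 / fact k"
proof (induction k)
  case 0 then show ?case by simp
next
  case (Suc k)
  have pos: "(real k + 1) * (4*real k + 2*n) > 0" using assms by simp
  have "\<bar>acoef n (Suc k)\<bar> = \<bar>real k - 1/2\<bar> * \<bar>acoef n k\<bar> / ((real k + 1) * (4*real k + 2*n))"
    using pos assms by (simp add: abs_mult abs_divide)
  also have "\<dots> \<le> (4*real k + 2*n) * (1 / fact k) / ((real k + 1) * (4*real k + 2*n))"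
    using assms Suc pos by (intro divide_right_mono mult_mono) auto
  also have "\<dots> = 1 / fact (Suc k)"
  proof -
    have A: "4*real k + 2*n \<noteq> 0" "real k + 1 \<noteq> 0" using assms by auto
    show ?thesis using A by (simp add: fact_Suc divide_simps)
  qed
  finally show ?case .
qed

lemma acoef_summable:
  assumes "n \<ge> 1" shows "summable (\<lambda>k. acoef n k * y^k)"
proof (rule summable_comparison_test[OF _ summable_exp[of "\<bar>y\<bar>"]])
  show "\<exists>N. \<forall>k\<ge>N. norm (acoef n k * y ^ k) \<le> inverse (fact k) * \<bar>y\<bar> ^ k"
    using acoef_bound[OF assms]
    by (auto simp: abs_mult power_abs divide_inverse intro!: mult_right_mono)
qed

lemma acoef_nonneg:
  assumes "n \<ge> 1" "k \<ge> 1" shows "acoef n k \<ge> 0"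
  using assms(2)
proof (induction k)
  case 0 then show ?case by simp
next
  case (Suc k)
  show ?case
  proof (cases "k = 0")
    case True then show ?thesis using assms by simp
  next
    case False
    then have "acoef n k \<ge> 0" "real k \<ge> 1" using Suc by auto
    then show ?thesis using assms by (auto intro!: divide_nonneg_pos mult_nonneg_nonneg)
  qed
qed

definition G1 where "G1 n s = (\<Sum>k. diffs (acoef n) k * s^k)"
definition G2 where "G2 n s = (\<Sum>k. diffs (diffs (acoef n)) k * s^k)"

lemma G_deriv:
  assumes "n \<ge> 1" shows "(G n has_real_derivative G1 n s) (at s)"
  unfolding G_def[abs_def] G1_def
  by (rule termdiffs_strong_converges_everywhere) (rule acoef_summable[OF assms])

lemma diffs_summable: assumes "n \<ge> 1" shows "summable (\<lambda>k. diffs (acoef n) k * y^k)"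
  by (rule termdiff_converges_all) (rule acoef_summable[OF assms])

lemma diffs2_summable: assumes "n \<ge> 1" shows "summable (\<lambda>k. diffs (diffs (acoef n)) k * y^k)"
  by (rule termdiff_converges_all) (rule diffs_summable[OF assms])

lemma G1_deriv:
  assumes "n \<ge> 1" shows "(G1 n has_real_derivative G2 n s) (at s)"
  unfolding G1_def[abs_def] G2_def
  by (rule termdiffs_strong_converges_everywhere) (rule diffs_summable[OF assms])

lemma G2_deriv:
  assumes "n \<ge> 1" shows "(G2 n has_real_derivative (\<Sum>k. diffs (diffs (diffs (acoef n))) k * s^k)) (at s)"
  unfolding G2_def[abs_def]
  by (rule termdiffs_strong_converges_everywhere) (rule diffs2_summable[OF assms])

lemma G_ode:
  assumes "n \<ge> 1"
  shows "4 * s * G2 n s + (2*n - s) * G1 n s + G n s / 2 = 0"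
proof -
  define a where "a = acoef n"
  define d1 where "d1 = diffs a"
  define d2 where "d2 = diffs d1"
  have S0: "(\<lambda>k. a k * s^k) sums G n s" unfolding G_def a_def using acoef_summable[OF assms] by (rule summable_sums)
  have S1: "(\<lambda>k. d1 k * s^k) sums G1 n s" unfolding G1_def d1_def a_def using diffs_summable[OF assms] by (rule summable_sums)
  have S2: "(\<lambda>k. d2 k * s^k) sums G2 n s" unfolding G2_def d2_def d1_def a_def using diffs2_summable[OF assms] by (rule summable_sums)
  have A: "(\<lambda>k. real k * (real k + 1) * a (Suc k) * s^k) sums (s * G2 n s)"
  proof -
    have "(\<lambda>k. s * (d2 k * s^k)) sums (s * G2 n s)" using S2 by (rule sums_mult)
    then have "(\<lambda>k. (\<lambda>k. real k * (real k + 1) * a (Suc k) * s^k) (Suc k)) sums (s * G2 n s)"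
      by (simp add: d2_def d1_def diffs_def algebra_simps)
    then show ?thesis using sums_Suc_iff[of "\<lambda>k. real k * (real k + 1) * a (Suc k) * s^k"] by simp
  qed
  have B: "(\<lambda>k. real k * a k * s^k) sums (s * G1 n s)"
  proof -
    have "(\<lambda>k. s * (d1 k * s^k)) sums (s * G1 n s)" using S1 by (rule sums_mult)
    then have "(\<lambda>k. (\<lambda>k. real k * a k * s^k) (Suc k)) sums (s * G1 n s)"
      by (simp add: d1_def diffs_def algebra_simps)
    then show ?thesis using sums_Suc_iff[of "\<lambda>k. real k * a k * s^k"] by simp
  qed
  have C: "(\<lambda>k. 4 * (real k * (real k + 1) * a (Suc k) * s^k) + 2*n * (d1 k * s^k)
              - real k * a k * s^k + (a k * s^k) / 2) sums
           (4 * (s * G2 n s) + 2*n * G1 n s - s * G1 n s + G n s / 2)"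
    by (intro sums_add sums_diff sums_mult sums_divide A B S0 S1)
  have Z: "4 * (real k * (real k + 1) * a (Suc k) * s^k) + 2*n * (d1 k * s^k)
              - real k * a k * s^k + (a k * s^k) / 2 = 0" for k
  proof -
    have pos: "(real k + 1) * (4*real k + 2*n) > 0" using assms by simp
    have A: "4*real k + 2*n \<noteq> 0" "real k + 1 \<noteq> 0" using assms by auto
    have "a (Suc k) * ((real k + 1) * (4*real k + 2*n)) = (real k - 1/2) * a k"
      using A by (simp add: a_def)
    then have E: "4 * (real k * (real k + 1) * a (Suc k)) + 2*n * d1 k - real k * a k + a k / 2 = 0"
      by (simp add: d1_def diffs_def algebra_simps)
    have "4 * (real k * (real k + 1) * a (Suc k) * s^k) + 2*n * (d1 k * s^k)
              - real k * a k * s^k + (a k * s^k) / 2 =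
          s^k * (4 * (real k * (real k + 1) * a (Suc k)) + 2*n * d1 k - real k * a k + a k / 2)"
      by (simp add: algebra_simps)
    then show ?thesis using E by simp
  qed
  from C have "(\<lambda>k. 0::real) sums (4 * (s * G2 n s) + 2*n * G1 n s - s * G1 n s + G n s / 2)"
    by (simp only: Z)
  then have "4 * (s * G2 n s) + 2*n * G1 n s - s * G1 n s + G n s / 2 = 0"
    using sums_unique sums_zero by (metis sums_unique2)
  then show ?thesis by (simp add: algebra_simps)
qed

lemma G_lower:
  assumes "n \<ge> 1" "s \<ge> 0"
  shows "G n s \<ge> -1 + s / (4*n) + s^2 / (32*n*(n+2))"
proof -
  have "(\<Sum>k<3. acoef n k * s^k) \<le> G n s"
    unfolding G_def
    by (rule sum_le_suminf[OF acoef_summable[OF assms(1)]])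
       (use assms acoef_nonneg in auto)
  moreover have "(\<Sum>k<3. acoef n k * s^k) = -1 + s / (4*n) + s^2 / (32*n*(n+2))"
    using assms by (simp add: numeral_3_eq_3 field_simps power2_eq_square)
  ultimately show ?thesis by simp
qed


lemma radial_deriv:
  assumes "\<And>s. (F has_real_derivative F' s) (at s)"
  shows "((\<lambda>x::'a::euclidean_space. F (x \<bullet> x)) has_derivative (\<lambda>h. F' (x \<bullet> x) * (2 * (x \<bullet> h)))) (at x)"
proof -
  have d1: "((\<lambda>x::'a. x \<bullet> x) has_derivative (\<lambda>h. x \<bullet> h + h \<bullet> x)) (at x)"
    by (intro derivative_eq_intros) auto
  have d2: "(F has_derivative (\<lambda>y. F' (x \<bullet> x) * y)) (at (x \<bullet> x))"
    using assms[of "x \<bullet> x"] by (simp add: has_field_derivative_def)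
  have "((F \<circ> (\<lambda>x::'a. x \<bullet> x)) has_derivative ((\<lambda>y. F' (x \<bullet> x) * y) \<circ> (\<lambda>h. x \<bullet> h + h \<bullet> x))) (at x)"
    by (rule diff_chain_at[OF d1 d2])
  then show ?thesis by (simp add: o_def inner_commute algebra_simps)
qed

lemma radial_pdiff:
  assumes "\<And>s. (F has_real_derivative F' s) (at s)"
  shows "pdiff (\<lambda>x::'a::euclidean_space. F (x \<bullet> x)) i = (\<lambda>x. 2 * F' (x \<bullet> x) * (x \<bullet> i))"
proof
  fix x :: 'a
  show "pdiff (\<lambda>x. F (x \<bullet> x)) i x = 2 * F' (x \<bullet> x) * (x \<bullet> i)"
    unfolding pdiff_def
    by (subst frechet_derivative_at[OF radial_deriv[OF assms, of x], symmetric]) (simp add: algebra_simps)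
qed

lemma radial2_deriv:
  assumes "\<And>s. (F has_real_derivative F' s) (at s)"
  shows "((\<lambda>x::'a::euclidean_space. 2 * F (x \<bullet> x) * (x \<bullet> i)) has_derivative
          (\<lambda>h. 2 * F (x \<bullet> x) * (h \<bullet> i) + 2 * (F' (x \<bullet> x) * (2 * (x \<bullet> h))) * (x \<bullet> i))) (at x)"
proof -
  have a: "((\<lambda>x::'a. 2 * F (x \<bullet> x)) has_derivative (\<lambda>h. 2 * (F' (x \<bullet> x) * (2 * (x \<bullet> h))))) (at x)"
    using has_derivative_scaleR_right[OF radial_deriv[OF assms, of x], of 2] by simp
  have b: "((\<lambda>x::'a. x \<bullet> i) has_derivative (\<lambda>h. h \<bullet> i)) (at x)"
    by (intro derivative_eq_intros) auto
  show ?thesis using has_derivative_mult[OF a b] by simp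
qed

lemma radial_pdiff2:
  assumes "\<And>s. (F has_real_derivative F' s) (at s)"
  shows "pdiff (\<lambda>x::'a::euclidean_space. 2 * F (x \<bullet> x) * (x \<bullet> i)) j =
         (\<lambda>x. 2 * F (x \<bullet> x) * (j \<bullet> i) + 4 * F' (x \<bullet> x) * (x \<bullet> j) * (x \<bullet> i))"
proof
  fix x :: 'a
  show "pdiff (\<lambda>x. 2 * F (x \<bullet> x) * (x \<bullet> i)) j x = 2 * F (x \<bullet> x) * (j \<bullet> i) + 4 * F' (x \<bullet> x) * (x \<bullet> j) * (x \<bullet> i)"
    unfolding pdiff_def
    by (subst frechet_derivative_at[OF radial2_deriv[OF assms, where x=x and i=i], symmetric]) (simp add: algebra_simps)
qed


theorem proposition4p16:
  fixes n :: real
  assumes "DIM('a::euclidean_space) \<ge> 2"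
    and "n = real DIM('a)"
  shows "stable_region (\<lambda>_::'a. 0)
           {x::'a. norm x > 2 * sqrt ((n + 2) * (sqrt ((3*n + 2) / (n + 2)) - 1))}"
proof -
  have n1: "n \<ge> 1" and n2: "n \<ge> 2" using assms by auto
  define u where "u = (\<lambda>x::'a. G n (x \<bullet> x))"
  have dG: "\<And>s. (G n has_real_derivative G1 n s) (at s)" using G_deriv[OF n1] .
  have dG1: "\<And>s. (G1 n has_real_derivative G2 n s) (at s)" using G1_deriv[OF n1] .
  have P1: "pdiff u i = (\<lambda>x. 2 * G1 n (x \<bullet> x) * (x \<bullet> i))" for i
    unfolding u_def by (rule radial_pdiff[OF dG])
  have P2: "pdiff (pdiff u i) j = (\<lambda>x. 2 * G1 n (x \<bullet> x) * (j \<bullet> i) + 4 * G2 n (x \<bullet> x) * (x \<bullet> j) * (x \<bullet> i))" for i j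
    unfolding P1 by (rule radial_pdiff2[OF dG1])
  have cG1: "continuous_on UNIV (G1 n)"
    by (metis continuous_at_imp_continuous_on DERIV_isCont dG1)
  have cG2: "continuous_on UNIV (G2 n)"
    by (metis continuous_at_imp_continuous_on DERIV_isCont G2_deriv[OF n1])
  have cc1: "continuous_on S (\<lambda>x::'a. G1 n (x \<bullet> x))" for S
    by (rule continuous_on_compose2[OF cG1]) (auto intro!: continuous_intros)
  have cc2: "continuous_on S (\<lambda>x::'a. G2 n (x \<bullet> x))" for S
    by (rule continuous_on_compose2[OF cG2]) (auto intro!: continuous_intros)
  have C2: "C2_on S u" for S
    unfolding C2_on_def
  proof (intro conjI ballI)
    fix x assume "x \<in> S"
    show "u differentiable at x" unfolding u_def differentiable_def
      using radial_deriv[OF dG] by blast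
  next
    fix i x assume "x \<in> S"
    show "pdiff u i differentiable at x" unfolding P1 differentiable_def
      using radial2_deriv[OF dG1] by blast
  next
    fix i j
    show "continuous_on S (pdiff (pdiff u i) j)" unfolding P2
      by (intro continuous_intros cc1 cc2)
  qed
  have Lap: "laplacian u x = 2 * n * G1 n (x \<bullet> x) + 4 * G2 n (x \<bullet> x) * (x \<bullet> x)" for x
  proof -
    have "laplacian u x = (\<Sum>i\<in>Basis. 2 * G1 n (x \<bullet> x) + 4 * G2 n (x \<bullet> x) * ((x \<bullet> i) * (x \<bullet> i)))"
      unfolding laplacian_def P2 by (intro sum.cong) (auto simp: algebra_simps)
    also have "\<dots> = 2 * n * G1 n (x \<bullet> x) + 4 * G2 n (x \<bullet> x) * (\<Sum>i\<in>Basis. (x \<bullet> i) * (x \<bullet> i))"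
      by (simp add: sum.distrib sum_distrib_left assms(2))
    also have "(\<Sum>i\<in>Basis. (x \<bullet> i) * (x \<bullet> i)) = x \<bullet> x"
      by (rule euclidean_inner[symmetric])
    finally show ?thesis .
  qed
  have Gr: "grad u x = (2 * G1 n (x \<bullet> x)) *\<^sub>R x" for x
  proof -
    have "grad u x = (\<Sum>i\<in>Basis. (2 * G1 n (x \<bullet> x)) *\<^sub>R ((x \<bullet> i) *\<^sub>R i))"
      unfolding grad_def P1 by (intro sum.cong) auto
    also have "\<dots> = (2 * G1 n (x \<bullet> x)) *\<^sub>R (\<Sum>i\<in>Basis. (x \<bullet> i) *\<^sub>R i)"
      by (rule scaleR_sum_right[symmetric])
    also have "\<dots> = (2 * G1 n (x \<bullet> x)) *\<^sub>R x"
      by (simp only: euclidean_representation)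
    finally show ?thesis .
  qed
  define R where "R = 2 * sqrt ((n + 2) * (sqrt ((3*n + 2) / (n + 2)) - 1))"
  have key: "u x > 0" if "norm x > R" for x
  proof -
    define q where "q = sqrt ((3*n + 2) / (n + 2))"
    have q1: "q \<ge> 1" unfolding q_def using n1 by (simp add: le_divide_eq)
    have qsq: "q^2 = (3*n+2)/(n+2)" unfolding q_def using n1 by simp
    have h: "0 \<le> (n + 2) * (sqrt ((3 * n + 2) / (n + 2)) - 1)"
      using q1 n1 unfolding q_def by (intro mult_nonneg_nonneg) auto
    have R2: "R^2 = 4 * (n+2) * (q - 1)" unfolding R_def q_def
      using h by (simp add: power_mult_distrib)
    have R0: "R \<ge> 0" unfolding R_def using h by simp
    define s where "s = x \<bullet> x"
    have s: "s > R^2" unfolding s_def using that R0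
      by (metis inner_real_def norm_eq_sqrt_inner power_strict_mono real_sqrt_pow2 inner_ge_zero pos2 power2_eq_square)
    have pR: "(R^2)^2 + 8*(n+2)*R^2 - 32*n*(n+2) = 0"
    proof -
      have "(R^2)^2 + 8*(n+2)*R^2 - 32*n*(n+2) = 16*(n+2)^2*(q^2 - 1) - 32*n*(n+2)"
        unfolding R2 by (simp add: algebra_simps power2_eq_square)
      also have "\<dots> = 0" unfolding qsq using n1 by (simp add: field_simps power2_eq_square)
      finally show ?thesis .
    qed
    have ps: "s^2 + 8*(n+2)* s - 32*n*(n+2) > 0"
    proof -
      have "R^2 \<ge> 0" by simp
      then have "s^2 > (R^2)^2" using s by (intro power_strict_mono) auto
      moreover have "8*(n+2)* s > 8*(n+2)*R^2" using s n1 by simp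
      ultimately show ?thesis using pR by linarith
    qed
    have "-1 + s / (4*n) + s^2 / (32*n*(n+2)) = (s^2 + 8*(n+2)* s - 32*n*(n+2)) / (32*n*(n+2))"
      proof -
        have "n \<noteq> 0" "n + 2 \<noteq> 0" using n1 by auto
        then show ?thesis by (simp add: divide_simps) (simp add: algebra_simps power2_eq_square)
      qed
    also have "\<dots> > 0" using ps n1 by simp
    finally have "-1 + s / (4*n) + s^2 / (32*n*(n+2)) > 0" .
    moreover have "G n s \<ge> -1 + s / (4*n) + s^2 / (32*n*(n+2))"
      using G_lower[OF n1] s_def by simp
    ultimately show ?thesis unfolding u_def s_def by linarith
  qed
  show ?thesis
    unfolding stable_region_def R_def[symmetric]
  proof (intro exI conjI ballI)
    show "C2_on {x. R < norm x} u" by (rule C2)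
  next
    fix x assume "x \<in> {x::'a. R < norm x}"
    then show "u x > 0" using key by auto
  next
    fix x :: 'a
    show "stab_op (\<lambda>_. 0) u x = 0"
      unfolding stab_op_def Lap Gr using G_ode[OF n1, of "x \<bullet> x"]
      by (simp add: u_def algebra_simps)
  qed
qed

end
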